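(* Consider the market and VCG mechanism described in the context, with the aggregate-dependence assumption. Fix a bidder $l\in L$ with true cost $c_l:\mathcal X_l\to\mathbb{R}_+$, and arbitrary fixed bids $\mathcal{C}_{-l}=\{c_j\}_{j\in L\setminus\{l\}}$ of the other bidders (not necessarily truthful); let $\mathcal{C}=(\mathcal{C}_{-l},c_l)$. Suppose bidder $l$ instead participates under a finite set $S$ of identities (disjoint from $L$) with bids $\mathcal{B}_S=\{b_k\}_{k\in S}$, $b_k:\hat{\mathcal X}_k\to\mathbb{R}_+$, $0\in\hat{\mathcal X}_k$, $b_k(0)=0$, where $\sum_{k\in S}\hat{\mathcal X}_k\subseteq\mathcal X_l$ (Minkowski sum). Let $\mathcal{B}=(\mathcal{C}_{-l},\mathcal{B}_S)$ be the resulting profile on the bidder set $L'=(L\setminus\{l\})\cup S$, and let $\gamma>0$ be a weak-supermodularity constant of the market objective on $L'$. Then bidder $l$'s total utility from shill bidding, $$U_{\mathrm{shill}}=\sum_{k\in S}p_k(\mathcal{B})-c_l\Big(\sum_{k\in S}x^*_k(\mathcal{B})\Big),$$ satisfies $$U_{\mathrm{shill}}\le u_l(\mathcal{C})+\big[\gamma^{-1}-1\big]\big[J(\mathcal{C}_{-l})-J(\mathcal{C}_{-l},\mathcal{B}_S)\big]\le u_l(\mathcal{C})+\big[\gamma^{-1}-1\big]\big[J(\mathcal{C}_{-l})-J(\mathcal{C}_{-l},\mathcal{B}^0_l)\big],$$ where $u_l(\mathcal{C})$ is bidder $l$'s VCG utility when bidding the single truthful bid $c_l$, $J(\mathcal{C}_{-l})$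 is the objective with bidder $l$ removed, and $\mathcal{B}^0_l$ is the single bid $b_l(x_l)=0$ for all $x_l\in\mathcal X_l$.
   Context: Market model. For a finite bidder set $N$ and $t\ge1$ types of supply, bidder $j\in N$ submits a bid function $b_j:\hat{\mathcal X}_j\to\mathbb{R}_+$ with $0\in\hat{\mathcal X}_j\subseteq\mathbb{R}^t_+$, $b_j(0)=0$; a bid profile is $\mathcal{B}=\{b_j\}_{j\in N}$. Aggregate-dependence assumption (same supply types from different bidders are perfect substitutes): there are fixed functions $\bar d:\mathbb{R}^t_+\times\mathbb{R}^p\to\mathbb{R}$ and $\bar g:\mathbb{R}^t_+\times\mathbb{R}^p\to\mathbb{R}^q$, and for any bidder set the cost term and constraints are $d(x,y)=\bar d(\sum_j x_j,y)$, $g(x,y)=\bar g(\sum_j x_j,y)$. For $S\subseteq N$, $$J(\mathcal{B}_S)=\min\Big\{\sum_{j\in S}b_j(x_j)+d(x,y):\ x\in\textstyle\prod_{j\in N}\hat{\mathcal X}_j,\ y\in\mathbb{R}^p,\ g(x,y)\le0,\ x_j=0\ \forall j\notin S\Big\},$$ with value $+\infty$ if infeasible (minima assumed attained when finite). Write $J(\mathcal{B})=J(\mathcal{B}_N)$ and $J(\mathcal{B}_{-K})=J(\mathcal{B}_{N\setminus K})$. $(x^*(\mathcal{B}),y^*(\mathcal{B}))$ denotes the minimizer for $S=N$ chosen by a fixed tie-breaking rule. Standing assumption: for every profile considered, $J(\mathcal{B})<\infty$ and $J(\mathcal{B}_{-j})<\infty$ for every bidder $j$. VCG mechanism (Clarke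 pivot): $p_j(\mathcal{B})=b_j(x^*_j(\mathcal{B}))+J(\mathcal{B}_{-j})-J(\mathcal{B})$; the utility of a bidder $j$ with true cost $c_j$ is $u_j(\mathcal{B})=p_j(\mathcal{B})-c_j(x^*_j(\mathcal{B}))$. Weak-supermodularity constant on bidder set $N$: $\gamma>0$ such that for every bid profile $\mathcal{B}$ on $N$ and all $K,S\subseteq N$ with $J(\mathcal{B}_{S\setminus K})<\infty$, $$\gamma\sum_{j\in K}\big[J(\mathcal{B}_{S\setminus\{j\}})-J(\mathcal{B}_S)\big]\le J(\mathcal{B}_{S\setminus K})-J(\mathcal{B}_S).$$ (The largest such $\gamma$ is the supermodularity ratio $\gamma_{\sup}$; the objective is weakly supermodular if $\gamma_{\sup}>0$.) *)

theory Defs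
  imports "HOL-Analysis.Analysis"
begin

text \<open>Supply vectors live in real^'t, auxiliary variables y in real^'p,
 constraint values in real^'q. Under the aggregate-dependence assumption the
 cost term and the constraints are dbar (sum of allocations) y and
 gbar (sum of allocations) y. A bid profile on a bidder set N is given by
 domains Xh j and bid functions b j (only their values on Xh j matter).\<close>

definition feasible ::
  "(real^'t \<Rightarrow> real^'p \<Rightarrow> real^'q) \<Rightarrow> 'b set \<Rightarrow> ('b \<Rightarrow> (real^'t) set)
    \<Rightarrow> 'b set \<Rightarrow> ('b \<Rightarrow> real^'t) \<Rightarrow> real^'p \<Rightarrow> bool" where
  "feasible gbar N Xh S x y \<longleftrightarrow>
     (\<forall>j\<in>N. x j \<in> Xh j) \<and> (\<forall>j. j \<notin> S \<longrightarrow> x j = 0) \<and>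
     (\<forall>i. gbar (\<Sum>j\<in>N. x j) y $ i \<le> 0)"

definition objective ::
  "(real^'t \<Rightarrow> real^'p \<Rightarrow> real) \<Rightarrow> 'b set \<Rightarrow> ('b \<Rightarrow> real^'t \<Rightarrow> real)
    \<Rightarrow> 'b set \<Rightarrow> ('b \<Rightarrow> real^'t) \<Rightarrow> real^'p \<Rightarrow> real" where
  "objective dbar N b S x y = (\<Sum>j\<in>S. b j (x j)) + dbar (\<Sum>j\<in>N. x j) y"

text \<open>J(B_S) on bidder set N; +infinity if infeasible.\<close>
definition J ::
  "(real^'t \<Rightarrow> real^'p \<Rightarrow> real) \<Rightarrow> (real^'t \<Rightarrow> real^'p \<Rightarrow> real^'q) \<Rightarrow> 'b set
    \<Rightarrow> ('b \<Rightarrow> (real^'t) set) \<Rightarrow> ('b \<Rightarrow> real^'t \<Rightarrow> real) \<Rightarrow> 'b set \<Rightarrow> ereal" where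
  "J dbar gbar N Xh b S =
     Inf {ereal (objective dbar N b S x y) | x y. feasible gbar N Xh S x y}"

definition attained where
  "attained dbar gbar N Xh b S \<longleftrightarrow>
     (J dbar gbar N Xh b S < \<infinity> \<longrightarrow>
       (\<exists>x y. feasible gbar N Xh S x y \<and>
              ereal (objective dbar N b S x y) = J dbar gbar N Xh b S))"

definition all_attained where
  "all_attained dbar gbar N Xh b \<longleftrightarrow> (\<forall>S\<subseteq>N. attained dbar gbar N Xh b S)"

definition valid_profile :: "'b set \<Rightarrow> ('b \<Rightarrow> (real^'t) set) \<Rightarrow> ('b \<Rightarrow> real^'t \<Rightarrow> real) \<Rightarrow> bool" where
  "valid_profile N Xh b \<longleftrightarrow>
     (\<forall>j\<in>N. 0 \<in> Xh j \<and> (\<forall>x\<in>Xh j. \<forall>i. 0 \<le> x $ i) \<and> b j 0 = 0 \<and>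
            (\<forall>x\<in>Xh j. 0 \<le> b j x))"

definition standing where
  "standing dbar gbar N Xh b \<longleftrightarrow>
     J dbar gbar N Xh b N < \<infinity> \<and> (\<forall>j\<in>N. J dbar gbar N Xh b (N - {j}) < \<infinity>)"

definition is_minimizer where
  "is_minimizer dbar gbar N Xh b x y \<longleftrightarrow>
     feasible gbar N Xh N x y \<and> ereal (objective dbar N b N x y) = J dbar gbar N Xh b N"

definition vcg_payment where
  "vcg_payment dbar gbar N Xh b x j =
     b j (x j) + real_of_ereal (J dbar gbar N Xh b (N - {j})) - real_of_ereal (J dbar gbar N Xh b N)"

definition wsm_const ::
  "(real^'t \<Rightarrow> real^'p \<Rightarrow> real) \<Rightarrow> (real^'t \<Rightarrow> real^'p \<Rightarrow> real^'q) \<Rightarrow> 'b set \<Rightarrow> real \<Rightarrow> bool" where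
  "wsm_const dbar gbar N \<gamma> \<longleftrightarrow> 0 < \<gamma> \<and>
     (\<forall>Xh b. valid_profile N Xh b \<and> all_attained dbar gbar N Xh b \<longrightarrow>
        (\<forall>K S. K \<subseteq> N \<and> S \<subseteq> N \<and> J dbar gbar N Xh b (S - K) < \<infinity> \<longrightarrow>
           ereal \<gamma> * (\<Sum>j\<in>K. J dbar gbar N Xh b (S - {j}) - J dbar gbar N Xh b S)
             \<le> J dbar gbar N Xh b (S - K) - J dbar gbar N Xh b S))"

end

theory Submission
  imports Defs
begin

lemma sum_zero_outside:
  fixes x :: "'b \<Rightarrow> 'a::comm_monoid_add"
  assumes "finite N" "T \<subseteq> N" "\<forall>j. j \<notin> T \<longrightarrow> x j = 0"
  shows "(\<Sum>j\<in>N. x j) = (\<Sum>j\<in>T. x j)"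
  using sum.mono_neutral_right[OF assms(1,2)] assms(3) by auto

lemma J_le_obj:
  "feasible g N X T x y \<Longrightarrow> J d g N X b T \<le> ereal (objective d N b T x y)"
  unfolding J_def by (rule Inf_lower) blast

lemma J_transfer:
  assumes "\<And>x y. feasible g N1 X1 T1 x y \<Longrightarrow>
     \<exists>x'. feasible g N2 X2 T2 x' y \<and> objective d N2 b2 T2 x' y \<le> objective d N1 b1 T1 x y"
  shows "J d g N2 X2 b2 T2 \<le> J d g N1 X1 b1 T1"
  unfolding J_def
proof (rule Inf_greatest)
  fix z assume "z \<in> {ereal (objective d N1 b1 T1 x y) |x y. feasible g N1 X1 T1 x y}"
  then obtain x y where z: "z = ereal (objective d N1 b1 T1 x y)" and f: "feasible g N1 X1 T1 x y" by blast
  from assms[OF f] obtain x' where f': "feasible g N2 X2 T2 x' y"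
    and le: "objective d N2 b2 T2 x' y \<le> objective d N1 b1 T1 x y" by blast
  have "Inf {ereal (objective d N2 b2 T2 x y) |x y. feasible g N2 X2 T2 x y} \<le> ereal (objective d N2 b2 T2 x' y)"
    by (rule Inf_lower) (use f' in blast)
  also have "\<dots> \<le> z" using le z by simp
  finally show "Inf {ereal (objective d N2 b2 T2 x y) |x y. feasible g N2 X2 T2 x y} \<le> z" .
qed

lemma feasible_zero: "feasible g N X T x y \<Longrightarrow> j \<notin> T \<Longrightarrow> x j = 0"
  unfolding feasible_def by blast

lemma J_same:
  assumes "finite N1" "finite N2" "T \<subseteq> N1" "T \<subseteq> N2"
    "\<forall>j\<in>N1. 0 \<in> X1 j" "\<forall>j\<in>N2. 0 \<in> X2 j" "\<forall>j\<in>T. X1 j = X2 j" "\<forall>j\<in>T. b1 j = b2 j"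
  shows "J d g N1 X1 b1 T = J d g N2 X2 b2 T"
proof -
  have key: "feasible g Na Xa T x y \<and> objective d Na ba T x y = objective d Nb bb T x y"
    if f: "feasible g Nb Xb T x y" and "finite Na" "finite Nb" "T \<subseteq> Na" "T \<subseteq> Nb"
      "\<forall>j\<in>Na. 0 \<in> Xa j" "\<forall>j\<in>T. Xa j = Xb j" "\<forall>j\<in>T. ba j = bb j"
    for Na Nb Xa Xb ba bb x y
  proof -
    have z: "\<forall>j. j \<notin> T \<longrightarrow> x j = 0" using f feasible_zero by metis
    have sa: "(\<Sum>j\<in>Na. x j) = (\<Sum>j\<in>T. x j)" by (rule sum_zero_outside) (use that z in auto)
    have sb: "(\<Sum>j\<in>Nb. x j) = (\<Sum>j\<in>T. x j)" by (rule sum_zero_outside) (use that z in auto)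
    have "feasible g Na Xa T x y"
      unfolding feasible_def
    proof (intro conjI ballI allI impI)
      fix j assume j: "j \<in> Na"
      show "x j \<in> Xa j"
      proof (cases "j \<in> T")
        case True then show ?thesis using f that unfolding feasible_def by auto
      next
        case False then show ?thesis using z j that by auto
      qed
    next
      fix j assume "j \<notin> T" then show "x j = 0" using z by auto
    next
      fix i show "g (\<Sum>j\<in>Na. x j) y $ i \<le> 0" using f sa sb unfolding feasible_def by auto
    qed
    moreover have "objective d Na ba T x y = objective d Nb bb T x y"
      unfolding objective_def using sa sb that by simp
    ultimately show ?thesis by blast
  qed
  show ?thesis
  proof (rule antisym)
    show "J d g N1 X1 b1 T \<le> J d g N2 X2 b2 T"
    proof (rule J_transfer)
      fix x y assume "feasible g N2 X2 T x y"
      then have "feasible g N1 X1 T x y \<and> objective d N1 b1 T x y = objective d N2 b2 T x y"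
        by (rule key) (use assms in auto)
      then show "\<exists>x'. feasible g N1 X1 T x' y \<and> objective d N1 b1 T x' y \<le> objective d N2 b2 T x y" by auto
    qed
    show "J d g N2 X2 b2 T \<le> J d g N1 X1 b1 T"
    proof (rule J_transfer)
      fix x y assume "feasible g N1 X1 T x y"
      then have "feasible g N2 X2 T x y \<and> objective d N2 b2 T x y = objective d N1 b1 T x y"
        by (rule key) (use assms in auto)
      then show "\<exists>x'. feasible g N2 X2 T x' y \<and> objective d N2 b2 T x' y \<le> objective d N1 b1 T x y" by auto
    qed
  qed
qed

lemma J_mono:
  assumes "valid_profile N X b" "finite N" "T' \<subseteq> T" "T \<subseteq> N"
  shows "J d g N X b T \<le> J d g N X b T'"
proof (rule J_transfer)
  fix x y assume f: "feasible g N X T' x y"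
  have z: "\<forall>j. j \<notin> T' \<longrightarrow> x j = 0" using f feasible_zero by metis
  have "feasible g N X T x y" using f assms(3) unfolding feasible_def by blast
  moreover have "(\<Sum>j\<in>T. b j (x j)) = (\<Sum>j\<in>T'. b j (x j))"
    using sum.mono_neutral_right[of T T' "\<lambda>j. b j (x j)"] assms z
    by (metis (no_types, lifting) Diff_iff finite_subset subsetD valid_profile_def)
  ultimately show "\<exists>x'. feasible g N X T x' y \<and> objective d N b T x' y \<le> objective d N b T' x y"
    unfolding objective_def by auto
qed


lemma corr_fwd:
  assumes "finite L" "l \<in> L" "finite S" "s0 \<in> S" "S \<inter> L = {}" "T \<subseteq> (L - {l}) \<union> S"
    and f: "feasible g ((L - {l}) \<union> S) (\<lambda>j. if j = s0 then Xh l else if j \<in> S then {0} else Xh j) T x y"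
  shows "\<exists>x'. feasible g L Xh ((T - S) \<union> (if s0 \<in> T then {l} else {})) x' y \<and>
     objective d L (\<lambda>j. if j = l then (\<lambda>_. 0) else c j) ((T - S) \<union> (if s0 \<in> T then {l} else {})) x' y
     = objective d ((L - {l}) \<union> S) (\<lambda>j. if j \<in> S then (\<lambda>_. 0) else c j) T x y"
proof -
  define x' where "x' = (\<lambda>j. if j = l then x s0 else if j \<in> S then 0 else x j)"
  define U where "U = (T - S) \<union> (if s0 \<in> T then {l} else {})"
  have z: "\<forall>j. j \<notin> T \<longrightarrow> x j = 0" using feasible_zero[OF f] by blast
  have dom: "\<forall>j\<in>(L - {l}) \<union> S. x j \<in> (if j = s0 then Xh l else if j \<in> S then {0} else Xh j)"
    using f unfolding feasible_def by (elim conjE) assumption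
  have lS: "l \<notin> S" using assms(2,5) by blast
  have xs0: "x s0 \<in> Xh l"
  proof -
    have "s0 \<in> L - {l} \<union> S" using assms(4) by blast
    from dom[rule_format, OF this] show ?thesis by simp
  qed
  have xL: "x j \<in> Xh j" if "j \<in> L - {l}" for j
  proof -
    have "j \<notin> S" "j \<noteq> s0" using that assms(4,5) by blast+
    moreover have "j \<in> L - {l} \<union> S" using that by blast
    ultimately show ?thesis using dom[rule_format, of j] by simp
  qed
  have xS: "\<forall>j\<in>S - {s0}. x j = 0"
  proof
    fix j assume j: "j \<in> S - {s0}"
    then have "j \<in> L - {l} \<union> S" by blast
    from dom[rule_format, OF this] j show "x j = 0" by simp
  qed
  have sumS: "(\<Sum>j\<in>S. x j) = x s0"
  proof -
    have "(\<Sum>j\<in>S. x j) = x s0 + (\<Sum>j\<in>S - {s0}. x j)" by (rule sum.remove[OF assms(3,4)])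
    moreover have "(\<Sum>j\<in>S - {s0}. x j) = 0" by (rule sum.neutral) (use xS in blast)
    ultimately show ?thesis by simp
  qed
  have sum1: "(\<Sum>j\<in>(L - {l}) \<union> S. x j) = (\<Sum>j\<in>L - {l}. x j) + x s0"
  proof -
    have "(\<Sum>j\<in>(L - {l}) \<union> S. x j) = (\<Sum>j\<in>L - {l}. x j) + (\<Sum>j\<in>S. x j)"
      by (rule sum.union_disjoint) (use assms(1,3,5) in auto)
    then show ?thesis using sumS by simp
  qed
  have sum2: "(\<Sum>j\<in>L. x' j) = x s0 + (\<Sum>j\<in>L - {l}. x j)"
  proof -
    have "(\<Sum>j\<in>L. x' j) = x' l + (\<Sum>j\<in>L - {l}. x' j)" by (rule sum.remove[OF assms(1,2)])
    moreover have "(\<Sum>j\<in>L - {l}. x' j) = (\<Sum>j\<in>L - {l}. x j)"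
    proof (rule sum.cong)
      fix j assume "j \<in> L - {l}"
      then have "j \<noteq> l" "j \<notin> S" using assms(5) by auto
      then show "x' j = x j" unfolding x'_def by simp
    qed simp
    moreover have "x' l = x s0" unfolding x'_def by simp
    ultimately show ?thesis by simp
  qed
  have feas: "feasible g L Xh U x' y"
    unfolding feasible_def
  proof (intro conjI ballI allI impI)
    fix j assume j: "j \<in> L"
    show "x' j \<in> Xh j"
    proof (cases "j = l")
      case True then show ?thesis using xs0 unfolding x'_def by simp
    next
      case False
      then have "j \<notin> S" using j assms by auto
      then show ?thesis using xL[of j] j False unfolding x'_def by simp
    qed
  next
    fix j assume j: "j \<notin> U"
    show "x' j = 0"
    proof (cases "j = l")
      case True
      then have "s0 \<notin> T" using j unfolding U_def by auto
      then show ?thesis using z True unfolding x'_def by simp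
    next
      case False
      show ?thesis
      proof (cases "j \<in> S")
        case True then show ?thesis using False unfolding x'_def by simp
      next
        case nS: False
        then have "j \<notin> T" using j unfolding U_def by auto
        then show ?thesis using z False nS unfolding x'_def by simp
      qed
    qed
  next
    fix i show "g (\<Sum>j\<in>L. x' j) y $ i \<le> 0"
    proof -
      have eq: "(\<Sum>j\<in>L. x' j) = (\<Sum>j\<in>(L - {l}) \<union> S. x j)"
        unfolding sum1 sum2 by (rule add.commute)
      have "g (\<Sum>j\<in>(L - {l}) \<union> S. x j) y $ i \<le> 0" using f unfolding feasible_def by blast
      then show ?thesis unfolding eq .
    qed
  qed
  have TS: "T - S \<subseteq> L - {l}" using assms by auto
  have o1: "(\<Sum>j\<in>U. (if j = l then (\<lambda>_. 0) else c j) (x' j)) = (\<Sum>j\<in>T - S. c j (x j))"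
  proof -
    have fin: "finite (T - S)" using TS assms finite_subset by blast
    have lT: "l \<notin> T - S" using TS by blast
    have "(\<Sum>j\<in>U. (if j = l then (\<lambda>_. 0) else c j) (x' j))
        = (\<Sum>j\<in>T - S. (if j = l then (\<lambda>_. 0) else c j) (x' j))"
      unfolding U_def using fin lT by (cases "s0 \<in> T") (auto)
    also have "\<dots> = (\<Sum>j\<in>T - S. c j (x j))"
      using TS unfolding x'_def by (intro sum.cong) auto
    finally show ?thesis .
  qed
  have o2: "(\<Sum>j\<in>T. (if j \<in> S then (\<lambda>_. 0) else c j) (x j)) = (\<Sum>j\<in>T - S. c j (x j))"
  proof -
    have fin: "finite T" using assms finite_subset by blast
    have "(\<Sum>j\<in>T. (if j \<in> S then (\<lambda>_. 0) else c j) (x j)) = (\<Sum>j\<in>T. if j \<in> S then 0 else c j (x j))"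
      by (intro sum.cong) auto
    also have "\<dots> = (\<Sum>j\<in>T - S. c j (x j))"
      using fin by (simp add: sum.If_cases Diff_eq)
    finally show ?thesis .
  qed
  show ?thesis
    unfolding U_def[symmetric]
    using feas o1 o2 sum1 sum2 unfolding objective_def
    by (intro exI[of _ x']) (simp add: add.commute)
qed

lemma corr_bwd:
  assumes "finite L" "l \<in> L" "finite S" "s0 \<in> S" "S \<inter> L = {}" "T \<subseteq> (L - {l}) \<union> S"
    and f: "feasible g L Xh ((T - S) \<union> (if s0 \<in> T then {l} else {})) x y"
  shows "\<exists>x'. feasible g ((L - {l}) \<union> S) (\<lambda>j. if j = s0 then Xh l else if j \<in> S then {0} else Xh j) T x' y \<and>
     objective d ((L - {l}) \<union> S) (\<lambda>j. if j \<in> S then (\<lambda>_. 0) else c j) T x' y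
     = objective d L (\<lambda>j. if j = l then (\<lambda>_. 0) else c j) ((T - S) \<union> (if s0 \<in> T then {l} else {})) x y"
proof -
  define U where "U = (T - S) \<union> (if s0 \<in> T then {l} else {})"
  define x' where "x' = (\<lambda>j. if j = s0 then x l else if j \<in> S then 0 else if j = l then 0 else x j)"
  have fU: "feasible g L Xh U x y" using f unfolding U_def .
  have z: "\<forall>j. j \<notin> U \<longrightarrow> x j = 0" using feasible_zero[OF fU] by blast
  have dom: "\<forall>j\<in>L. x j \<in> Xh j"
    using fU unfolding feasible_def by (elim conjE) assumption
  have lS: "l \<notin> S" using assms(2,5) by blast
  have TS: "T - S \<subseteq> L - {l}" using assms(6) by blast
  have lT: "l \<notin> T - S" using TS by blast
  have xS: "\<forall>j\<in>S - {s0}. x' j = 0" unfolding x'_def by simp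
  have sumS: "(\<Sum>j\<in>S. x' j) = x l"
  proof -
    have "(\<Sum>j\<in>S. x' j) = x' s0 + (\<Sum>j\<in>S - {s0}. x' j)" by (rule sum.remove[OF assms(3,4)])
    moreover have "(\<Sum>j\<in>S - {s0}. x' j) = 0" by (rule sum.neutral) (use xS in blast)
    ultimately show ?thesis unfolding x'_def by simp
  qed
  have sumLl: "(\<Sum>j\<in>L - {l}. x' j) = (\<Sum>j\<in>L - {l}. x j)"
  proof (rule sum.cong)
    fix j assume "j \<in> L - {l}"
    then have "j \<noteq> l" "j \<notin> S" "j \<noteq> s0" using assms(4,5) by blast+
    then show "x' j = x j" unfolding x'_def by simp
  qed simp
  have sum1: "(\<Sum>j\<in>(L - {l}) \<union> S. x' j) = (\<Sum>j\<in>L - {l}. x j) + x l"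
  proof -
    have "(\<Sum>j\<in>(L - {l}) \<union> S. x' j) = (\<Sum>j\<in>L - {l}. x' j) + (\<Sum>j\<in>S. x' j)"
      by (rule sum.union_disjoint) (use assms(1,3,5) in auto)
    then show ?thesis using sumS sumLl by simp
  qed
  have sum2: "(\<Sum>j\<in>L. x j) = x l + (\<Sum>j\<in>L - {l}. x j)" by (rule sum.remove[OF assms(1,2)])
  have eq: "(\<Sum>j\<in>(L - {l}) \<union> S. x' j) = (\<Sum>j\<in>L. x j)"
    unfolding sum1 sum2 by (rule add.commute)
  have feas: "feasible g ((L - {l}) \<union> S) (\<lambda>j. if j = s0 then Xh l else if j \<in> S then {0} else Xh j) T x' y"
    unfolding feasible_def
  proof (intro conjI ballI allI impI)
    fix j assume j: "j \<in> (L - {l}) \<union> S"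
    show "x' j \<in> (if j = s0 then Xh l else if j \<in> S then {0} else Xh j)"
    proof (cases "j = s0")
      case True then show ?thesis using dom assms(2) unfolding x'_def by simp
    next
      case F1: False
      show ?thesis
      proof (cases "j \<in> S")
        case True then show ?thesis using F1 unfolding x'_def by simp
      next
        case False
        then have "j \<in> L" "j \<noteq> l" using j by blast+
        then show ?thesis using dom F1 False unfolding x'_def by simp
      qed
    qed
  next
    fix j assume j: "j \<notin> T"
    show "x' j = 0"
    proof (cases "j = s0")
      case True
      then have "l \<notin> U" using j lT unfolding U_def by auto
      then show ?thesis using z True unfolding x'_def by simp
    next
      case F1: False
      show ?thesis
      proof (cases "j \<in> S \<or> j = l")
        case True then show ?thesis using F1 unfolding x'_def by auto
      next
        case False
        then have "j \<notin> U" using j unfolding U_def by auto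
        then show ?thesis using z F1 False unfolding x'_def by simp
      qed
    qed
  next
    fix i
    have "g (\<Sum>j\<in>L. x j) y $ i \<le> 0" using fU unfolding feasible_def by blast
    then show "g (\<Sum>j\<in>(L - {l}) \<union> S. x' j) y $ i \<le> 0" unfolding eq .
  qed
  have o1: "(\<Sum>j\<in>U. (if j = l then (\<lambda>_. 0) else c j) (x j)) = (\<Sum>j\<in>T - S. c j (x j))"
  proof -
    have fin: "finite (T - S)" using TS assms finite_subset by blast
    have "(\<Sum>j\<in>U. (if j = l then (\<lambda>_. 0) else c j) (x j))
        = (\<Sum>j\<in>T - S. (if j = l then (\<lambda>_. 0) else c j) (x j))"
      unfolding U_def using fin lT by (cases "s0 \<in> T") (auto)
    also have "\<dots> = (\<Sum>j\<in>T - S. c j (x j))"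
      using lT by (intro sum.cong) auto
    finally show ?thesis .
  qed
  have o2: "(\<Sum>j\<in>T. (if j \<in> S then (\<lambda>_. 0) else c j) (x' j)) = (\<Sum>j\<in>T - S. c j (x j))"
  proof -
    have fin: "finite T" using assms finite_subset by blast
    have "(\<Sum>j\<in>T. (if j \<in> S then (\<lambda>_. 0) else c j) (x' j)) = (\<Sum>j\<in>T. if j \<in> S then 0 else c j (x' j))"
      by (intro sum.cong) auto
    also have "\<dots> = (\<Sum>j\<in>T - S. c j (x' j))"
      using fin by (simp add: sum.If_cases Diff_eq)
    also have "\<dots> = (\<Sum>j\<in>T - S. c j (x j))"
    proof (rule sum.cong)
      fix j assume "j \<in> T - S"
      then have "j \<noteq> l" "j \<notin> S" "j \<noteq> s0" using lT assms(4) by blast+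
      then show "c j (x' j) = c j (x j)" unfolding x'_def by simp
    qed simp
    finally show ?thesis .
  qed
  show ?thesis
    unfolding U_def[symmetric]
    using feas o1 o2 eq unfolding objective_def
    by (intro exI[of _ x']) simp
qed


lemma attained_fin:
  assumes "attained d g N X b T" "J d g N X b T < \<infinity>"
  shows "J d g N X b T = ereal (real_of_ereal (J d g N X b T))"
proof -
  from assms obtain x y where "ereal (objective d N b T x y) = J d g N X b T"
    unfolding attained_def by blast
  then show ?thesis by (metis real_of_ereal.simps(1))
qed

theorem theorem1:
  fixes dbar :: "real^'t \<Rightarrow> real^'p \<Rightarrow> real"
    and gbar :: "real^'t \<Rightarrow> real^'p \<Rightarrow> real^'q"
    and L S :: "'b set" and l :: 'b
    and Xh :: "'b \<Rightarrow> (real^'t) set"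
    and c b :: "'b \<Rightarrow> real^'t \<Rightarrow> real"
    and \<gamma> :: real
    and xC xB :: "'b \<Rightarrow> real^'t" and yC yB :: "real^'p"
  defines "L' \<equiv> (L - {l}) \<union> S"
    and "bB \<equiv> (\<lambda>j. if j \<in> S then b j else c j)"
    and "b0 \<equiv> (\<lambda>j. if j = l then (\<lambda>_. 0) else c j)"
  assumes "finite L" and "l \<in> L" and "finite S" and "S \<noteq> {}" and "S \<inter> L = {}"
    and "valid_profile L Xh c"
    and "valid_profile S Xh b"
    and "\<forall>z. (\<forall>k\<in>S. z k \<in> Xh k) \<longrightarrow> (\<Sum>k\<in>S. z k) \<in> Xh l"
    and "standing dbar gbar L Xh c"
    and "standing dbar gbar L' Xh bB"
    and "all_attained dbar gbar L Xh c"
    and "all_attained dbar gbar L' Xh bB"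
    and "all_attained dbar gbar L Xh b0"
    and "wsm_const dbar gbar L' \<gamma>"
    and "is_minimizer dbar gbar L Xh c xC yC"
    and "is_minimizer dbar gbar L' Xh bB xB yB"
  shows "(\<Sum>k\<in>S. vcg_payment dbar gbar L' Xh bB xB k) - c l (\<Sum>k\<in>S. xB k)
           \<le> (vcg_payment dbar gbar L Xh c xC l - c l (xC l))
              + (1 / \<gamma> - 1) * (real_of_ereal (J dbar gbar L Xh c (L - {l}))
                                 - real_of_ereal (J dbar gbar L' Xh bB L'))
       \<and> (vcg_payment dbar gbar L Xh c xC l - c l (xC l))
              + (1 / \<gamma> - 1) * (real_of_ereal (J dbar gbar L Xh c (L - {l}))
                                 - real_of_ereal (J dbar gbar L' Xh bB L'))
           \<le> (vcg_payment dbar gbar L Xh c xC l - c l (xC l))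
              + (1 / \<gamma> - 1) * (real_of_ereal (J dbar gbar L Xh c (L - {l}))
                                 - real_of_ereal (J dbar gbar L Xh b0 L))"
proof -
  note fL = assms(4) and lL = assms(5) and fS = assms(6) and Sne = assms(7) and SL = assms(8)
  note vcP = assms(9) and vbP = assms(10) and mink = assms(11)
  note stC = assms(12) and stB = assms(13) and atC = assms(14) and atB = assms(15) and at0 = assms(16)
  note wsm = assms(17) and minC = assms(18) and minB = assms(19)
  have fL': "finite L'" unfolding L'_def using fL fS by blast
  have SL': "S \<subseteq> L'" unfolding L'_def by blast
  have L'S: "L' - S = L - {l}" unfolding L'_def using SL by blast
  have lS: "l \<notin> S" using SL lL by blast
  have vc: "\<forall>j\<in>L. 0 \<in> Xh j \<and> (\<forall>x\<in>Xh j. \<forall>i. 0 \<le> x $ i) \<and> c j 0 = 0 \<and> (\<forall>x\<in>Xh j. 0 \<le> c j x)"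
    using vcP unfolding valid_profile_def .
  have vb: "\<forall>j\<in>S. 0 \<in> Xh j \<and> (\<forall>x\<in>Xh j. \<forall>i. 0 \<le> x $ i) \<and> b j 0 = 0 \<and> (\<forall>x\<in>Xh j. 0 \<le> b j x)"
    using vbP unfolding valid_profile_def .
  have validB: "valid_profile L' Xh bB"
    unfolding valid_profile_def
  proof
    fix j assume j: "j \<in> L'"
    show "0 \<in> Xh j \<and> (\<forall>x\<in>Xh j. \<forall>i. 0 \<le> x $ i) \<and> bB j 0 = 0 \<and> (\<forall>x\<in>Xh j. 0 \<le> bB j x)"
    proof (cases "j \<in> S")
      case True then show ?thesis using vb unfolding bB_def by simp
    next
      case False then have "j \<in> L" using j unfolding L'_def by blast
      then show ?thesis using vc False unfolding bB_def by simp
    qed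
  qed
  have zL: "\<forall>j\<in>L. 0 \<in> Xh j" using vc by blast
  have zL': "\<forall>j\<in>L'. 0 \<in> Xh j" using validB unfolding valid_profile_def by blast

  define oB where "oB = objective dbar L' bB L' xB yB"
  define oC where "oC = objective dbar L c L xC yC"
  have fB: "feasible gbar L' Xh L' xB yB" and JB: "J dbar gbar L' Xh bB L' = ereal oB"
    using minB unfolding is_minimizer_def oB_def by auto
  have JC: "J dbar gbar L Xh c L = ereal oC"
    using minC unfolding is_minimizer_def oC_def by auto
  define rCl where "rCl = real_of_ereal (J dbar gbar L Xh c (L - {l}))"
  have JCl: "J dbar gbar L Xh c (L - {l}) = ereal rCl"
    unfolding rCl_def
    by (rule attained_fin) (use stC atC lL in \<open>auto simp: standing_def all_attained_def\<close>)
  define rk where "rk k = real_of_ereal (J dbar gbar L' Xh bB (L' - {k}))" for k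
  have JBk: "J dbar gbar L' Xh bB (L' - {k}) = ereal (rk k)" if "k \<in> S" for k
    unfolding rk_def
    by (rule attained_fin) (use stB atB that SL' in \<open>auto simp: standing_def all_attained_def\<close>)
  have JBS: "J dbar gbar L' Xh bB (L' - S) = J dbar gbar L Xh c (L - {l})"
    unfolding L'S
    by (rule J_same) (use fL' fL zL zL' lS SL in \<open>auto simp: L'_def bB_def\<close>)

  have gpos: "0 < \<gamma>" using wsm unfolding wsm_const_def by blast
  have W: "ereal \<gamma> * (\<Sum>j\<in>S. J dbar gbar L' Xh bB (L' - {j}) - J dbar gbar L' Xh bB L')
             \<le> J dbar gbar L' Xh bB (L' - S) - J dbar gbar L' Xh bB L'"
  proof -
    have WW: "\<forall>K S'. K \<subseteq> L' \<and> S' \<subseteq> L' \<and> J dbar gbar L' Xh bB (S' - K) < \<infinity> \<longrightarrow>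
           ereal \<gamma> * (\<Sum>j\<in>K. J dbar gbar L' Xh bB (S' - {j}) - J dbar gbar L' Xh bB S')
             \<le> J dbar gbar L' Xh bB (S' - K) - J dbar gbar L' Xh bB S'"
      using wsm validB atB unfolding wsm_const_def by blast
    have "S \<subseteq> L' \<and> L' \<subseteq> L' \<and> J dbar gbar L' Xh bB (L' - S) < \<infinity>"
      using SL' JBS JCl by simp
    then show ?thesis using WW by blast
  qed
  have sumW: "(\<Sum>j\<in>S. J dbar gbar L' Xh bB (L' - {j}) - J dbar gbar L' Xh bB L')
      = ereal (\<Sum>j\<in>S. rk j - oB)"
  proof -
    have "(\<Sum>j\<in>S. J dbar gbar L' Xh bB (L' - {j}) - J dbar gbar L' Xh bB L')
        = (\<Sum>j\<in>S. ereal (rk j - oB))"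
      by (rule sum.cong) (simp_all add: JBk JB)
    also have "\<dots> = ereal (\<Sum>j\<in>S. rk j - oB)" by (rule sum_ereal)
    finally show ?thesis .
  qed
  have Wr: "\<gamma> * (\<Sum>j\<in>S. rk j - oB) \<le> rCl - oB"
    using W unfolding sumW unfolding JBS JCl JB by simp
  have Wd: "(\<Sum>j\<in>S. rk j - oB) \<le> (rCl - oB) / \<gamma>"
    using Wr gpos by (simp add: pos_le_divide_eq mult.commute)

  have pay: "(\<Sum>k\<in>S. vcg_payment dbar gbar L' Xh bB xB k) = (\<Sum>k\<in>S. b k (xB k)) + (\<Sum>k\<in>S. rk k - oB)"
  proof -
    have "(\<Sum>k\<in>S. vcg_payment dbar gbar L' Xh bB xB k) = (\<Sum>k\<in>S. b k (xB k) + (rk k - oB))"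
    proof (rule sum.cong)
      fix k assume "k \<in> S"
      then have "bB k = b k" unfolding bB_def by simp
      then show "vcg_payment dbar gbar L' Xh bB xB k = b k (xB k) + (rk k - oB)"
        unfolding vcg_payment_def JB rk_def by simp
    qed simp
    then show ?thesis by (simp add: sum.distrib)
  qed
  have ul: "vcg_payment dbar gbar L Xh c xC l - c l (xC l) = rCl - oC"
    unfolding vcg_payment_def JC JCl by simp

  define X where "X = (\<Sum>k\<in>S. xB k)"
  define x2 where "x2 = (\<lambda>j. if j = l then X else if j \<in> S then 0 else xB j)"
  define D where "D = dbar (\<Sum>j\<in>L'. xB j) yB"
  define CL where "CL = (\<Sum>j\<in>L - {l}. c j (xB j))"
  define BS where "BS = (\<Sum>k\<in>S. b k (xB k))"
  have zB: "\<forall>j. j \<notin> L' \<longrightarrow> xB j = 0" using feasible_zero[OF fB] by blast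
  have domB: "\<forall>j\<in>L'. xB j \<in> Xh j" using fB unfolding feasible_def by (elim conjE) assumption
  have XXh: "X \<in> Xh l" unfolding X_def using mink domB SL' by blast
  have x2L: "(\<Sum>j\<in>L - {l}. f j (x2 j)) = (\<Sum>j\<in>L - {l}. f j (xB j))" for f :: "'b \<Rightarrow> real^'t \<Rightarrow> 'z::comm_monoid_add"
  proof (rule sum.cong)
    fix j assume "j \<in> L - {l}"
    then have "j \<noteq> l" "j \<notin> S" using SL by blast+
    then show "f j (x2 j) = f j (xB j)" unfolding x2_def by simp
  qed simp
  have sumx2: "(\<Sum>j\<in>L. x2 j) = (\<Sum>j\<in>L'. xB j)"
  proof -
    have "(\<Sum>j\<in>L. x2 j) = x2 l + (\<Sum>j\<in>L - {l}. x2 j)" by (rule sum.remove[OF fL lL])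
    also have "(\<Sum>j\<in>L - {l}. x2 j) = (\<Sum>j\<in>L - {l}. xB j)"
      using x2L[of "\<lambda>_ v. v"] by simp
    also have "x2 l = X" unfolding x2_def by simp
    finally have a: "(\<Sum>j\<in>L. x2 j) = X + (\<Sum>j\<in>L - {l}. xB j)" .
    have "(\<Sum>j\<in>L'. xB j) = (\<Sum>j\<in>L - {l}. xB j) + X"
      unfolding L'_def X_def by (rule sum.union_disjoint) (use fL fS SL in auto)
    then show ?thesis using a by (simp add: add.commute)
  qed
  have f2: "feasible gbar L Xh L x2 yB"
    unfolding feasible_def
  proof (intro conjI ballI allI impI)
    fix j assume j: "j \<in> L"
    show "x2 j \<in> Xh j"
    proof (cases "j = l")
      case True then show ?thesis using XXh unfolding x2_def by simp
    next
      case False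
      then have "j \<notin> S" "j \<in> L'" using j SL unfolding L'_def by blast+
      then show ?thesis using domB False unfolding x2_def by simp
    qed
  next
    fix j assume j: "j \<notin> L"
    then have "j \<noteq> l" "j \<notin> L' \<or> j \<in> S" using lL unfolding L'_def by blast+
    then show "x2 j = 0" using zB unfolding x2_def by auto
  next
    fix i
    have "gbar (\<Sum>j\<in>L'. xB j) yB $ i \<le> 0" using fB unfolding feasible_def by blast
    then show "gbar (\<Sum>j\<in>L. x2 j) yB $ i \<le> 0" unfolding sumx2 .
  qed
  have objc: "objective dbar L c L x2 yB = CL + c l X + D"
  proof -
    have "(\<Sum>j\<in>L. c j (x2 j)) = c l (x2 l) + (\<Sum>j\<in>L - {l}. c j (x2 j))" by (rule sum.remove[OF fL lL])
    then show ?thesis unfolding objective_def sumx2 D_def CL_def x2L[of c] by (simp add: x2_def)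
  qed
  have obj0: "objective dbar L b0 L x2 yB = CL + D"
  proof -
    have "(\<Sum>j\<in>L. b0 j (x2 j)) = b0 l (x2 l) + (\<Sum>j\<in>L - {l}. b0 j (x2 j))" by (rule sum.remove[OF fL lL])
    moreover have "(\<Sum>j\<in>L - {l}. b0 j (xB j)) = CL" unfolding CL_def b0_def by (rule sum.cong) auto
    ultimately show ?thesis unfolding objective_def sumx2 D_def x2L[of b0] by (simp add: b0_def)
  qed
  have objB: "oB = CL + BS + D"
  proof -
    have "(\<Sum>j\<in>L'. bB j (xB j)) = (\<Sum>j\<in>L - {l}. bB j (xB j)) + (\<Sum>j\<in>S. bB j (xB j))"
      unfolding L'_def by (rule sum.union_disjoint) (use fL fS SL in auto)
    moreover have "(\<Sum>j\<in>L - {l}. bB j (xB j)) = CL" unfolding CL_def bB_def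
      by (rule sum.cong) (use SL in auto)
    moreover have "(\<Sum>j\<in>S. bB j (xB j)) = BS" unfolding BS_def bB_def by (rule sum.cong) auto
    ultimately show ?thesis unfolding oB_def objective_def D_def by simp
  qed
  have BSnn: "0 \<le> BS" unfolding BS_def
    by (rule sum_nonneg) (use vb domB SL' in blast)
  have oCle: "oC \<le> CL + c l X + D"
  proof -
    have "J dbar gbar L Xh c L \<le> ereal (objective dbar L c L x2 yB)" by (rule J_le_obj[OF f2])
    then show ?thesis unfolding JC objc by simp
  qed
  have J0le: "J dbar gbar L Xh b0 L \<le> ereal (CL + D)"
    using J_le_obj[OF f2, of dbar b0] unfolding obj0 .
  define r0 where "r0 = real_of_ereal (J dbar gbar L Xh b0 L)"
  have J0: "J dbar gbar L Xh b0 L = ereal r0"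
    unfolding r0_def
    by (rule attained_fin) (use at0 J0le in \<open>auto simp: all_attained_def\<close>)
  have r0le: "r0 \<le> oB" using J0le BSnn unfolding J0 objB by simp

  show ?thesis
  proof
    have e: "(1 / \<gamma> - 1) * (rCl - oB) = (rCl - oB) / \<gamma> - (rCl - oB)" by (simp add: algebra_simps)
    show "(\<Sum>k\<in>S. vcg_payment dbar gbar L' Xh bB xB k) - c l (\<Sum>k\<in>S. xB k)
           \<le> (vcg_payment dbar gbar L Xh c xC l - c l (xC l))
              + (1 / \<gamma> - 1) * (real_of_ereal (J dbar gbar L Xh c (L - {l}))
                                 - real_of_ereal (J dbar gbar L' Xh bB L'))"
      unfolding pay ul JB JCl real_of_ereal.simps e X_def[symmetric] BS_def[symmetric]
      using Wd oCle objB by linarith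
  next
    show "(vcg_payment dbar gbar L Xh c xC l - c l (xC l))
              + (1 / \<gamma> - 1) * (real_of_ereal (J dbar gbar L Xh c (L - {l}))
                                 - real_of_ereal (J dbar gbar L' Xh bB L'))
           \<le> (vcg_payment dbar gbar L Xh c xC l - c l (xC l))
              + (1 / \<gamma> - 1) * (real_of_ereal (J dbar gbar L Xh c (L - {l}))
                                 - real_of_ereal (J dbar gbar L Xh b0 L))"
      unfolding ul JB JCl J0 real_of_ereal.simps
    proof (cases "\<gamma> \<le> 1")
      case True
      then have "0 \<le> 1 / \<gamma> - 1" using gpos by simp
      then have "(1 / \<gamma> - 1) * (rCl - oB) \<le> (1 / \<gamma> - 1) * (rCl - r0)"
        using r0le by (intro mult_left_mono) auto
      then show "rCl - oC + (1 / \<gamma> - 1) * (rCl - oB) \<le> rCl - oC + (1 / \<gamma> - 1) * (rCl - r0)"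
        by simp
    next
      case False
      have key: "rCl \<le> r0 \<and> oB \<le> rCl"
      proof
        have "J dbar gbar L' Xh bB L' \<le> J dbar gbar L' Xh bB (L' - S)"
          by (rule J_mono[OF validB fL']) auto
        then show "oB \<le> rCl" unfolding JB JBS JCl by simp
      next
        from Sne obtain s0 where s0: "s0 \<in> S" by blast
        define Xh2 where "Xh2 = (\<lambda>j. if j = s0 then Xh l else if j \<in> S then {0} else Xh j)"
        define b2 where "b2 = (\<lambda>j. if j \<in> S then (\<lambda>_::real^'t. 0::real) else c j)"
        define phi where "phi T = (T - S) \<union> (if s0 \<in> T then {l} else {})" for T
        have phiL: "phi T \<subseteq> L" if "T \<subseteq> L'" for T
          using that lL unfolding phi_def L'_def by auto
        have bwd: "\<exists>x'. feasible gbar L' Xh2 T x' y \<and> objective dbar L' b2 T x' y = objective dbar L b0 (phi T) x y"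
          if "T \<subseteq> L'" "feasible gbar L Xh (phi T) x y" for T x y
          using corr_bwd[OF fL lL fS s0 SL, of T gbar Xh x y dbar c] that
          unfolding Xh2_def b2_def phi_def L'_def b0_def by blast
        have fwd: "\<exists>x'. feasible gbar L Xh (phi T) x' y \<and> objective dbar L b0 (phi T) x' y = objective dbar L' b2 T x y"
          if "T \<subseteq> L'" "feasible gbar L' Xh2 T x y" for T x y
          using corr_fwd[OF fL lL fS s0 SL, of T gbar Xh x y dbar c] that
          unfolding Xh2_def b2_def phi_def L'_def b0_def by blast
        have corrJ: "J dbar gbar L' Xh2 b2 T = J dbar gbar L Xh b0 (phi T)" if T: "T \<subseteq> L'" for T
        proof (rule antisym)
          show "J dbar gbar L' Xh2 b2 T \<le> J dbar gbar L Xh b0 (phi T)"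
          proof (rule J_transfer)
            fix x y assume "feasible gbar L Xh (phi T) x y"
            from bwd[OF T this] show "\<exists>x'. feasible gbar L' Xh2 T x' y \<and>
                objective dbar L' b2 T x' y \<le> objective dbar L b0 (phi T) x y" by auto
          qed
          show "J dbar gbar L Xh b0 (phi T) \<le> J dbar gbar L' Xh2 b2 T"
          proof (rule J_transfer)
            fix x y assume "feasible gbar L' Xh2 T x y"
            from fwd[OF T this] show "\<exists>x'. feasible gbar L Xh (phi T) x' y \<and>
                objective dbar L b0 (phi T) x' y \<le> objective dbar L' b2 T x y" by auto
          qed
        qed
        have valid2: "valid_profile L' Xh2 b2"
          unfolding valid_profile_def
        proof
          fix j assume j: "j \<in> L'"
          show "0 \<in> Xh2 j \<and> (\<forall>x\<in>Xh2 j. \<forall>i. 0 \<le> x $ i) \<and> b2 j 0 = 0 \<and> (\<forall>x\<in>Xh2 j. 0 \<le> b2 j x)"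
          proof (cases "j \<in> S")
            case True
            show ?thesis
            proof (cases "j = s0")
              case True then show ?thesis using vc lL s0 unfolding Xh2_def b2_def by simp
            next
              case False then show ?thesis using \<open>j \<in> S\<close> unfolding Xh2_def b2_def by simp
            qed
          next
            case False
            then have "j \<in> L" "j \<noteq> s0" using j s0 unfolding L'_def by blast+
            then show ?thesis using vc False unfolding Xh2_def b2_def by simp
          qed
        qed
        have att2: "all_attained dbar gbar L' Xh2 b2"
          unfolding all_attained_def
        proof (intro allI impI)
          fix T assume T: "T \<subseteq> L'"
          show "attained dbar gbar L' Xh2 b2 T"
            unfolding attained_def
          proof
            assume "J dbar gbar L' Xh2 b2 T < \<infinity>"
            then have lt: "J dbar gbar L Xh b0 (phi T) < \<infinity>" using corrJ[OF T] by simp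
            have "attained dbar gbar L Xh b0 (phi T)" using at0 phiL[OF T] unfolding all_attained_def by blast
            then obtain x y where fx: "feasible gbar L Xh (phi T) x y"
              and ex: "ereal (objective dbar L b0 (phi T) x y) = J dbar gbar L Xh b0 (phi T)"
              using lt unfolding attained_def by blast
            from bwd[OF T fx] obtain x' where "feasible gbar L' Xh2 T x' y"
              "objective dbar L' b2 T x' y = objective dbar L b0 (phi T) x y" by blast
            then show "\<exists>x y. feasible gbar L' Xh2 T x y \<and> ereal (objective dbar L' b2 T x y) = J dbar gbar L' Xh2 b2 T"
              using ex corrJ[OF T] by metis
          qed
        qed
        have J0Cl: "J dbar gbar L Xh b0 (L - {l}) = ereal rCl"
        proof -
          have "J dbar gbar L Xh b0 (L - {l}) = J dbar gbar L Xh c (L - {l})"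
            by (rule J_same) (use fL zL in \<open>auto simp: b0_def\<close>)
          then show ?thesis using JCl by simp
        qed
        have p1: "phi L' = L" using lL s0 SL unfolding phi_def L'_def by auto
        have p2: "phi (L' - S) = L - {l}" using s0 SL unfolding phi_def L'_def by auto
        have p3: "phi (L' - {k}) = (if k = s0 then L - {l} else L)" if "k \<in> S" for k
          using lL s0 SL that unfolding phi_def L'_def by auto
        have V1: "J dbar gbar L' Xh2 b2 L' = ereal r0" using corrJ[of L'] p1 J0 by simp
        have V2: "J dbar gbar L' Xh2 b2 (L' - S) = ereal rCl" using corrJ[of "L' - S"] p2 J0Cl by auto
        have V3: "J dbar gbar L' Xh2 b2 (L' - {k}) = (if k = s0 then ereal rCl else ereal r0)" if "k \<in> S" for k
          using corrJ[of "L' - {k}"] p3[OF that] J0Cl J0 by auto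
        have WW: "\<forall>K S'. K \<subseteq> L' \<and> S' \<subseteq> L' \<and> J dbar gbar L' Xh2 b2 (S' - K) < \<infinity> \<longrightarrow>
           ereal \<gamma> * (\<Sum>j\<in>K. J dbar gbar L' Xh2 b2 (S' - {j}) - J dbar gbar L' Xh2 b2 S')
             \<le> J dbar gbar L' Xh2 b2 (S' - K) - J dbar gbar L' Xh2 b2 S'"
          using wsm valid2 att2 unfolding wsm_const_def by blast
        have "S \<subseteq> L' \<and> L' \<subseteq> L' \<and> J dbar gbar L' Xh2 b2 (L' - S) < \<infinity>"
          using SL' V2 by simp
        then have W2: "ereal \<gamma> * (\<Sum>j\<in>S. J dbar gbar L' Xh2 b2 (L' - {j}) - J dbar gbar L' Xh2 b2 L')
             \<le> J dbar gbar L' Xh2 b2 (L' - S) - J dbar gbar L' Xh2 b2 L'" using WW by blast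
        have sum2: "(\<Sum>j\<in>S. J dbar gbar L' Xh2 b2 (L' - {j}) - J dbar gbar L' Xh2 b2 L') = ereal (rCl - r0)"
        proof -
          have "(\<Sum>j\<in>S. J dbar gbar L' Xh2 b2 (L' - {j}) - J dbar gbar L' Xh2 b2 L')
              = (\<Sum>j\<in>S. ereal (if j = s0 then rCl - r0 else 0))"
            by (rule sum.cong) (simp_all add: V3 V1)
          also have "\<dots> = ereal (\<Sum>j\<in>S. (if j = s0 then rCl - r0 else 0))" by (rule sum_ereal)
          also have "(\<Sum>j\<in>S. (if j = s0 then rCl - r0 else 0)) = rCl - r0"
            using fS s0 by (simp add: sum.delta)
          finally show ?thesis .
        qed
        have g: "\<gamma> * (rCl - r0) \<le> rCl - r0" using W2 unfolding sum2 unfolding V1 V2 by simp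
        show "rCl \<le> r0"
        proof (rule ccontr)
          assume "\<not> rCl \<le> r0"
          then have "0 < rCl - r0" by simp
          then have "1 * (rCl - r0) < \<gamma> * (rCl - r0)" using False by (intro mult_strict_right_mono) auto
          then show False using g by simp
        qed
      qed
      have "1 / \<gamma> - 1 \<le> 0" using False gpos by simp
      then have "(1 / \<gamma> - 1) * (rCl - oB) \<le> (1 / \<gamma> - 1) * (rCl - r0)"
        using key by (intro mult_left_mono_neg) auto
      then show "rCl - oC + (1 / \<gamma> - 1) * (rCl - oB) \<le> rCl - oC + (1 / \<gamma> - 1) * (rCl - r0)"
        by simp
    qed
  qed
qed

end
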